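(* For a finite graph $G=(V,E)$, the function $$S^B(\mathbf{x})=\frac12\sum_{v\in V}\Big\{\sum_{e\in\partial v}\big(-x_e\ln x_e+(1-x_e)\ln(1-x_e)\big)-2\Big(1-\sum_{e\in\partial v}x_e\Big)\ln\Big(1-\sum_{e\in\partial v}x_e\Big)\Big\}$$ (with $0\ln0=0$) is non-negative and concave on $FM(G)$.
   Context: $\partial v$ denotes the set of edges incident to $v$. $FM(G)=\{\mathbf{x}\in\mathbb{R}^E:x_e\ge0,\ \sum_{e\in\partial v}x_e\le1\ \forall v\in V\}$. *)

theory Defs
  imports Complex_Main
begin

definition finite_simple_graph :: "'a set \<Rightarrow> 'a set set \<Rightarrow> bool" where
  "finite_simple_graph V E \<longleftrightarrow> finite V \<and> (\<forall>e\<in>E. e \<subseteq> V \<and> card e = 2)"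

definition incident :: "'a set set \<Rightarrow> 'a \<Rightarrow> 'a set set" where
  "incident E v = {e\<in>E. v \<in> e}"

text \<open>Fractional matching polytope FM(G), vectors in R^E represented as functions
  on edge sets that vanish outside E.\<close>
definition FM :: "'a set \<Rightarrow> 'a set set \<Rightarrow> ('a set \<Rightarrow> real) set" where
  "FM V E = {x. (\<forall>e. e \<notin> E \<longrightarrow> x e = 0) \<and> (\<forall>e\<in>E. x e \<ge> 0)
               \<and> (\<forall>v\<in>V. (\<Sum>e\<in>incident E v. x e) \<le> 1)}"

definition xlnx :: "real \<Rightarrow> real" where
  "xlnx t = (if t = 0 then 0 else t * ln t)"

definition SB :: "'a set \<Rightarrow> 'a set set \<Rightarrow> ('a set \<Rightarrow> real) \<Rightarrow> real" where
  "SB V E x = (1/2) * (\<Sum>v\<in>V.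
      (\<Sum>e\<in>incident E v. - xlnx (x e) + xlnx (1 - x e))
      - 2 * xlnx (1 - (\<Sum>e\<in>incident E v. x e)))"

definition concave_fun_on :: "('b \<Rightarrow> real) set \<Rightarrow> (('b \<Rightarrow> real) \<Rightarrow> real) \<Rightarrow> bool" where
  "concave_fun_on S f \<longleftrightarrow> (\<forall>x\<in>S. \<forall>y\<in>S. \<forall>t::real. 0 \<le> t \<and> t \<le> 1 \<longrightarrow>
      f (\<lambda>e. t * x e + (1 - t) * y e) \<ge> t * f x + (1 - t) * f y)"

end

theory Submission
  imports Defs "HOL-Analysis.Analysis"
begin


lemma titu_step:
  fixes a c A W w :: real
  assumes "a\<^sup>2 \<le> A * W" "0 \<le> A" "0 \<le> W" "0 \<le> w" "w = 0 \<Longrightarrow> c = 0"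
  shows "(a + c)\<^sup>2 \<le> (A + c\<^sup>2 / w) * (W + w)"
proof (cases "w = 0")
  case True then show ?thesis using assms by simp
next
  case False
  with assms have w: "0 < w" by simp
  show ?thesis
  proof (cases "W = 0")
    case True
    then have "a = 0" using assms by simp
    then show ?thesis using True w assms by (simp add: field_simps)
  next
    case False
    with assms have W: "0 < W" by simp
    have "a\<^sup>2 / W \<le> A" using assms W by (simp add: divide_le_eq)
    have key: "(a/W + c/w)\<^sup>2 * (W * w) * (W + w) \<ge> 0" using W w by simp
    have "(a + c)\<^sup>2 \<le> (a\<^sup>2 / W + c\<^sup>2 / w) * (W + w)"
    proof -
      have "(a\<^sup>2 / W + c\<^sup>2 / w) * (W + w) - (a + c)\<^sup>2 = (a * w - c * W)\<^sup>2 / (W * w)"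
        using W w by (simp add: field_simps power2_eq_square)
      moreover have "(a * w - c * W)\<^sup>2 / (W * w) \<ge> 0" using W w by simp
      ultimately show ?thesis by linarith
    qed
    also have "\<dots> \<le> (A + c\<^sup>2 / w) * (W + w)"
      using \<open>a\<^sup>2 / W \<le> A\<close> W w by (intro mult_right_mono) auto
    finally show ?thesis .
  qed
qed

lemma titu:
  fixes p w :: "'b \<Rightarrow> real"
  assumes "finite S" "\<And>i. i \<in> S \<Longrightarrow> 0 \<le> w i" "\<And>i. i \<in> S \<Longrightarrow> w i = 0 \<Longrightarrow> p i = 0"
  shows "(sum p S)\<^sup>2 \<le> (\<Sum>i\<in>S. (p i)\<^sup>2 / w i) * sum w S"
  using assms
proof (induction S rule: finite_induct)
  case empty then show ?case by simp
next
  case (insert x F)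
  have "(sum p F + p x)\<^sup>2 \<le> ((\<Sum>i\<in>F. (p i)\<^sup>2 / w i) + (p x)\<^sup>2 / w x) * (sum w F + w x)"
    by (rule titu_step) (use insert in \<open>auto intro!: sum_nonneg\<close>)
  then show ?case using insert by (simp add: add.commute)
qed





lemma concave_closure01:
  fixes \<phi> :: "real \<Rightarrow> real"
  assumes conc: "concave_on {0<..<1} \<phi>" and cont: "continuous_on {0..1} \<phi>"
    and t: "0 \<le> t" "t \<le> 1"
  shows "t * \<phi> 1 + (1 - t) * \<phi> 0 \<le> \<phi> t"
proof (cases "t = 0 \<or> t = 1")
  case True then show ?thesis by auto
next
  case False
  with t have t': "0 < t" "t < 1" by auto
  define f where "f \<epsilon> = (\<phi> (1-\<epsilon>) - \<phi> \<epsilon>) / ((1-\<epsilon>)-\<epsilon>) * (t - \<epsilon>) + \<phi> \<epsilon>" for \<epsilon>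
  have g: "continuous_on {0..1} (\<lambda>\<epsilon>. \<phi> (1-\<epsilon>))"
    by (rule continuous_on_compose2[OF cont]) (auto intro!: continuous_intros)
  have l1: "((\<lambda>\<epsilon>. \<phi> (1-\<epsilon>)) \<longlongrightarrow> \<phi> 1) (at_right 0)"
    using continuous_on_Icc_at_rightD[OF g] by simp
  have l0: "(\<phi> \<longlongrightarrow> \<phi> 0) (at_right 0)"
    using continuous_on_Icc_at_rightD[OF cont] by simp
  have lim: "(f \<longlongrightarrow> (\<phi> 1 - \<phi> 0) / ((1-0)-0) * (t - 0) + \<phi> 0) (at_right 0)"
    unfolding f_def
    by (intro tendsto_intros l1 l0) (auto intro!: tendsto_eq_intros)
  have ev: "eventually (\<lambda>\<epsilon>. f \<epsilon> \<le> \<phi> t) (at_right 0)"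
    unfolding eventually_at_right_field
  proof (intro exI[of _ "min t (1-t)"] conjI allI impI)
    show "0 < min t (1-t)" using t' by simp
    fix \<epsilon> :: real assume e: "0 < \<epsilon>" "\<epsilon> < min t (1-t)"
    have "concave_on {\<epsilon>..1-\<epsilon>} \<phi>"
      using conc unfolding concave_on_def
      by (rule convex_on_subset) (use e in auto)
    from concave_onD_Icc'[OF this, of t] e show "f \<epsilon> \<le> \<phi> t"
      unfolding f_def by auto
  qed
  have "(\<phi> 1 - \<phi> 0) / ((1-0)-0) * (t - 0) + \<phi> 0 \<le> \<phi> t"
    by (rule tendsto_upperbound[OF lim ev]) simp
  then show ?thesis by (simp add: algebra_simps)
qed



lemma xlnx_lim0: "((\<lambda>x::real. x * ln x) \<longlongrightarrow> 0) (at_right 0)"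
proof (rule tendsto_sandwich[where f="\<lambda>x. - 2 * sqrt x" and h="\<lambda>x. 0"])
  have b: "- 2 * sqrt x \<le> x * ln x" if "0 < x" for x :: real
  proof -
    have "ln (1 / sqrt x) \<le> 1 / sqrt x - 1" using that by (intro ln_le_minus_one) auto
    moreover have "ln (1 / sqrt x) = - ln x / 2" using that by (simp add: ln_div ln_sqrt)
    ultimately have "- ln x \<le> 2 / sqrt x" by simp
    then have "x * (- ln x) \<le> x * (2 / sqrt x)" using that by (intro mult_left_mono) auto
    also have "x * (2 / sqrt x) = 2 * sqrt x" using that
      by (metis divide_real_def mult.left_commute real_div_sqrt less_eq_real_def mult.commute times_divide_eq_right)
    finally show ?thesis by simp
  qed
  show "eventually (\<lambda>x::real. - 2 * sqrt x \<le> x * ln x) (at_right 0)"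
    using b by (auto simp: eventually_at_right_field intro!: exI[of _ 1])
  show "eventually (\<lambda>x::real. x * ln x \<le> 0) (at_right 0)"
    unfolding eventually_at_right_field
    by (rule exI[of _ 1]) (auto simp: mult_le_0_iff)
  show "((\<lambda>x. - 2 * sqrt x) \<longlongrightarrow> 0) (at_right 0)"
  proof -
    have "((\<lambda>x. - 2 * sqrt x) \<longlongrightarrow> - 2 * sqrt 0) (at_right (0::real))"
      by (intro tendsto_intros tendsto_ident_at)
    then show ?thesis by simp
  qed
qed simp



lemma aff_pos:
  fixes a b s :: real
  assumes "0 \<le> a" "0 \<le> a + b" "0 < s" "s < 1"
  shows "0 < a + s * b \<or> (a = 0 \<and> b = 0)"
proof -
  have e: "a + s * b = (1 - s) * a + s * (a + b)" by (simp add: algebra_simps)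
  show ?thesis
  proof (cases "a = 0 \<and> a + b = 0")
    case True then show ?thesis by auto
  next
    case False
    then have "0 < (1 - s) * a \<or> 0 < s * (a + b)"
      using assms by (auto simp: less_le)
    moreover have "0 \<le> (1 - s) * a" "0 \<le> s * (a + b)" using assms by auto
    ultimately show ?thesis unfolding e by linarith
  qed
qed

lemma xlnx_deriv:
  assumes "0 < a + s * b \<or> (a = 0 \<and> b = 0)"
  shows "((\<lambda>s. xlnx (a + s * b)) has_real_derivative (b * (ln (a + s * b) + 1))) (at s)"
  using assms
proof
  assume p: "0 < a + s * b"
  have d: "((\<lambda>s. (a + s * b) * ln (a + s * b)) has_real_derivative (b * (ln (a + s * b) + 1))) (at s)"
    proof -
      have nz: "a + b * s \<noteq> 0" using p by (simp add: mult.commute)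
      have "a * b / (a + b * s) + b * (b * s) / (a + b * s) = (b * (a + b * s)) / (a + b * s)"
        by (simp add: add_divide_distrib[symmetric] algebra_simps)
      also have "\<dots> = b" using nz by simp
      finally have eq: "a * b / (a + b * s) + b * (b * s) / (a + b * s) = b" .
      show ?thesis using p nz eq by (auto intro!: derivative_eq_intros simp: algebra_simps)
    qed
  show ?thesis
  proof (rule has_field_derivative_transform_within_open[OF d, of "{s'. 0 < a + s' * b}"])
    show "open {s'. 0 < a + s' * b}" by (intro open_Collect_less continuous_intros)
  qed (use p in \<open>auto simp: xlnx_def\<close>)
next
  assume "a = 0 \<and> b = 0"
  then show ?thesis by (simp add: xlnx_def)
qed

lemma ln_deriv:
  assumes "0 < a + s * b \<or> (a = 0 \<and> b = 0)"
  shows "((\<lambda>s. b * (ln (a + s * b) + 1)) has_real_derivative (b^2 / (a + s * b))) (at s)"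
  using assms
proof
  assume p: "0 < a + s * b"
  show ?thesis
    using p by (auto intro!: derivative_eq_intros simp: field_simps power2_eq_square)
next
  assume "a = 0 \<and> b = 0"
  then show ?thesis by simp
qed

lemma xlnx_cont: "continuous_on {0..} xlnx"
proof -
  have "continuous (at x within {0..}) xlnx" if "x \<ge> 0" for x
  proof (cases "x = 0")
    case True
    have "((\<lambda>x::real. x * ln x) \<longlongrightarrow> 0) (at_right 0)" by (rule xlnx_lim0)
    then have "(xlnx \<longlongrightarrow> 0) (at_right 0)"
      by (rule Lim_transform_eventually) (auto simp: xlnx_def eventually_at_right_field intro: exI[of _ 1])
    then have "(xlnx \<longlongrightarrow> xlnx 0) (at 0 within {0..})"
      by (simp add: xlnx_def at_within_Ici_at_right)
    then show ?thesis using True by (simp add: continuous_within)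
  next
    case False
    with that have p: "x > 0" by simp
    have "isCont (\<lambda>x. x * ln x) x" using p by (intro continuous_intros) auto
    then have "isCont xlnx x"
    proof (subst isCont_cong)
      have "eventually (\<lambda>y. y \<in> {0<..}) (nhds x)"
        using p by (intro eventually_nhds_in_open) auto
      then show "eventually (\<lambda>y. xlnx y = y * ln y) (nhds x)"
        by eventually_elim (auto simp: xlnx_def)
    qed
    then show ?thesis by (simp add: continuous_at_imp_continuous_within)
  qed
  then show ?thesis by (simp add: continuous_on_eq_continuous_within)
qed



lemma w_bound:
  fixes u uk :: real
  assumes "0 \<le> u" "u + uk \<le> 1" "1/2 < uk"
  shows "u * (1 - u) / (1 - 2 * u) \<le> u * (uk / (2 * uk - 1))"
proof -
  have d1: "0 < 1 - 2 * u" "0 < 2 * uk - 1" using assms by auto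
  have "(1 - u) * (2 * uk - 1) \<le> uk * (1 - 2 * u)" using assms by (simp add: algebra_simps)
  then have "(1 - u) / (1 - 2 * u) \<le> uk / (2 * uk - 1)"
    using d1 by (simp add: divide_simps)
  then have "u * ((1 - u) / (1 - 2 * u)) \<le> u * (uk / (2 * uk - 1))"
    using assms by (intro mult_left_mono) auto
  then show ?thesis by simp
qed

lemma key_ineq:
  fixes I :: "'b set" and u c :: "'b \<Rightarrow> real"
  assumes fin: "finite I" and u0: "\<And>e. e \<in> I \<Longrightarrow> 0 \<le> u e"
    and rho: "0 \<le> 1 - sum u I"
    and cu: "\<And>e. e \<in> I \<Longrightarrow> c e \<noteq> 0 \<Longrightarrow> 0 < u e \<and> u e < 1"
    and cr: "sum c I \<noteq> 0 \<Longrightarrow> 0 < 1 - sum u I"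
  shows "(\<Sum>e\<in>I. (c e)\<^sup>2 / (1 - u e)) \<le> (\<Sum>e\<in>I. (c e)\<^sup>2 / u e) + 2 * (sum c I)\<^sup>2 / (1 - sum u I)"
proof (cases "\<exists>k\<in>I. c k \<noteq> 0 \<and> 1/2 < u k")
  case False
  note nb = False
  have "(\<Sum>e\<in>I. (c e)\<^sup>2 / (1 - u e)) \<le> (\<Sum>e\<in>I. (c e)\<^sup>2 / u e)"
  proof (rule sum_mono)
    fix e assume e: "e \<in> I"
    show "(c e)\<^sup>2 / (1 - u e) \<le> (c e)\<^sup>2 / u e"
    proof (cases "c e = 0")
      case True then show ?thesis by simp
    next
      case False
      with e cu nb have "0 < u e" "u e \<le> 1 - u e" by force+
      then show ?thesis by (intro divide_left_mono) auto
    qed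
  qed
  moreover have "0 \<le> 2 * (sum c I)\<^sup>2 / (1 - sum u I)" using rho by simp
  ultimately show ?thesis by linarith
next
  case True
  then obtain k where k: "k \<in> I" "c k \<noteq> 0" "1/2 < u k" by blast
  define J where "J = I - {k}"
  define \<rho> where "\<rho> = 1 - sum u I"
  define C where "C = sum c I"
  have finJ: "finite J" using fin by (simp add: J_def)
  have sumI: "sum f I = f k + sum f J" for f :: "'b \<Rightarrow> real"
    using fin k(1) by (simp add: J_def sum.remove)
  have uk1: "u k < 1" using cu k by auto
  have sJ: "sum u J + \<rho> = 1 - u k" using sumI[of u] by (simp add: \<rho>_def)
  have sJ0: "0 \<le> sum u J" using u0 by (intro sum_nonneg) (auto simp: J_def)
  have uJ: "u e + u k \<le> 1" if "e \<in> J" for e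
  proof -
    have "u e \<le> sum u J" using that finJ u0 by (intro member_le_sum) (auto simp: J_def)
    then show ?thesis using sJ rho \<rho>_def by linarith
  qed
  have ueh: "u e < 1/2" if "e \<in> J" for e using uJ[OF that] k by linarith
  define w where "w e = u e * (1 - u e) / (1 - 2 * u e)" for e
  define q where "q e = (c e)\<^sup>2 / u e - (c e)\<^sup>2 / (1 - u e)" for e
  have w0: "0 \<le> w e" if "e \<in> J" for e
    using ueh[OF that] u0[of e] that by (auto simp: w_def J_def)
  have wz: "c e = 0" if "e \<in> J" "w e = 0" for e
  proof (rule ccontr)
    assume "c e \<noteq> 0"
    with cu that have "0 < u e" "u e < 1" by (auto simp: J_def)
    with ueh[OF that(1)] that(2) show False by (simp add: w_def)
  qed
  have qw: "(c e)\<^sup>2 / w e = q e" if "e \<in> J" for e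
  proof (cases "c e = 0")
    case True then show ?thesis by (simp add: q_def)
  next
    case False
    with cu that have "0 < u e" "u e < 1" by (auto simp: J_def)
    with ueh[OF that] show ?thesis by (simp add: w_def q_def field_simps)
  qed
  have q0: "0 \<le> q e" if "e \<in> J" for e
    using qw[OF that] w0[OF that] by (metis divide_nonneg_nonneg zero_le_power2)
  have t1: "(sum (\<lambda>e. - c e) J)\<^sup>2 \<le> (\<Sum>e\<in>J. (- c e)\<^sup>2 / w e) * sum w J"
    by (rule titu[OF finJ]) (use w0 wz in auto)
  then have t1': "(- sum c J)\<^sup>2 \<le> sum q J * sum w J"
    using qw by (simp add: sum_negf)
  have t2: "(- sum c J + C)\<^sup>2 \<le> (sum q J + C\<^sup>2 / (\<rho>/2)) * (sum w J + \<rho>/2)"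
    by (rule titu_step[OF t1']) (use q0 w0 rho cr in \<open>auto intro!: sum_nonneg simp: \<rho>_def C_def\<close>)
  have ck: "- sum c J + C = c k" using sumI[of c] by (simp add: C_def)
  define R where "R = sum q J + 2 * C\<^sup>2 / \<rho>"
  define W where "W = sum w J + \<rho>/2"
  have R0: "0 \<le> R"
  proof -
    have "0 \<le> sum q J" using q0 by (rule sum_nonneg)
    moreover have "0 \<le> 2 * C\<^sup>2 / \<rho>" using rho by (simp add: \<rho>_def)
    ultimately show ?thesis by (simp add: R_def)
  qed
  have ckR: "(c k)\<^sup>2 \<le> R * W" using t2 ck by (simp add: R_def W_def mult.commute)
  define \<alpha> where "\<alpha> = 1 / (1 - u k) - 1 / u k"
  have a0: "0 \<le> \<alpha>" using k uk1 by (simp add: \<alpha>_def divide_simps)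
  have "W \<le> (uk / (2 * uk - 1)) * (sum u J + \<rho>)" if "uk = u k" for uk
  proof -
    have "sum w J \<le> (\<Sum>e\<in>J. u e * (uk / (2 * uk - 1)))"
      using w_bound uJ u0 k that by (intro sum_mono) (auto simp: w_def J_def)
    also have "\<dots> = sum u J * (uk / (2 * uk - 1))" by (rule sum_distrib_right[symmetric])
    finally have a: "sum w J \<le> sum u J * (uk / (2 * uk - 1))" .
    have "\<rho> / 2 \<le> \<rho> * (uk / (2 * uk - 1))"
    proof -
      have "1/2 \<le> uk / (2 * uk - 1)" using k that uk1 by (simp add: divide_simps)
      then have "\<rho> * (1/2) \<le> \<rho> * (uk / (2 * uk - 1))"
        using rho by (intro mult_left_mono) (auto simp: \<rho>_def)
      then show ?thesis by simp
    qed
    moreover have "(uk / (2 * uk - 1)) * (sum u J + \<rho>) = sum u J * (uk / (2 * uk - 1)) + \<rho> * (uk / (2 * uk - 1))"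
      by (simp add: distrib_left mult.commute add_divide_distrib)
    ultimately show ?thesis using a unfolding W_def by linarith
  qed
  then have Wb: "W \<le> (u k / (2 * u k - 1)) * (1 - u k)" using sJ by simp
  have "\<alpha> * ((u k / (2 * u k - 1)) * (1 - u k)) = 1"
  proof -
    have n: "u k \<noteq> 0" "1 - u k \<noteq> 0" "2 * u k - 1 \<noteq> 0" using k uk1 by auto
    have p: "u k * (1 - u k) * (2 * u k - 1) \<noteq> 0" using n by simp
    have m: "u k * (u k * 3) \<noteq> u k + u k * (u k * (u k * 2))"
    proof
      assume "u k * (u k * 3) = u k + u k * (u k * (u k * 2))"
      then have "u k * (1 - u k) * (2 * u k - 1) = 0" by (simp add: algebra_simps)
      with p show False by simp
    qed
    show ?thesis unfolding \<alpha>_def using n m by (simp add: field_simps)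
  qed
  moreover have "\<alpha> * W \<le> \<alpha> * ((u k / (2 * u k - 1)) * (1 - u k))" using Wb a0 by (rule mult_left_mono)
  ultimately have aW: "\<alpha> * W \<le> 1" by linarith
  have "\<alpha> * (c k)\<^sup>2 \<le> \<alpha> * (R * W)" using ckR a0 by (rule mult_left_mono)
  also have "\<dots> = (\<alpha> * W) * R" by simp
  also have "\<dots> \<le> 1 * R" using aW R0 by (rule mult_right_mono)
  also have "\<dots> = R" by simp
  finally have main: "(c k)\<^sup>2 / (1 - u k) - (c k)\<^sup>2 / u k \<le> R" by (simp add: \<alpha>_def algebra_simps)
  have "sum q J = (\<Sum>e\<in>J. (c e)\<^sup>2 / u e) - (\<Sum>e\<in>J. (c e)\<^sup>2 / (1 - u e))"
    by (simp add: q_def sum_subtractf)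
  then show ?thesis
    using main sumI[of "\<lambda>e. (c e)\<^sup>2 / (1 - u e)"] sumI[of "\<lambda>e. (c e)\<^sup>2 / u e"]
    by (simp add: R_def \<rho>_def C_def)
qed



definition Fv :: "'b set \<Rightarrow> ('b \<Rightarrow> real) \<Rightarrow> real" where
  "Fv I x = (\<Sum>e\<in>I. - xlnx (x e) + xlnx (1 - x e)) - 2 * xlnx (1 - (\<Sum>e\<in>I. x e))"

lemma aff_nonneg:
  fixes a b s :: real
  assumes "0 \<le> a" "0 \<le> a + b" "0 \<le> s" "s \<le> 1"
  shows "0 \<le> a + s * b"
proof -
  have e: "a + s * b = (1 - s) * a + s * (a + b)" by (simp add: algebra_simps)
  have "0 \<le> (1 - s) * a" "0 \<le> s * (a + b)" using assms by auto
  then show ?thesis unfolding e by linarith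
qed

lemma Fv_concave:
  fixes I :: "'b set" and x y :: "'b \<Rightarrow> real"
  assumes fin: "finite I" and x0: "\<And>e. e \<in> I \<Longrightarrow> 0 \<le> x e" and y0: "\<And>e. e \<in> I \<Longrightarrow> 0 \<le> y e"
    and sx: "sum x I \<le> 1" and sy: "sum y I \<le> 1" and t: "0 \<le> t" "t \<le> 1"
  shows "t * Fv I x + (1 - t) * Fv I y \<le> Fv I (\<lambda>e. t * x e + (1 - t) * y e)"
proof -
  define b where "b e = x e - y e" for e
  define B where "B = sum b I"
  define Y where "Y = sum y I"
  define \<phi> where "\<phi> s = (\<Sum>e\<in>I. - xlnx (y e + s * b e) + xlnx ((1 - y e) + s * (- b e)))
      - 2 * xlnx ((1 - Y) + s * (- B))" for s
  define \<phi>' where "\<phi>' s = (\<Sum>e\<in>I. - (b e * (ln (y e + s * b e) + 1)) + (- b e) * (ln ((1 - y e) + s * (- b e)) + 1))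
      - 2 * ((- B) * (ln ((1 - Y) + s * (- B)) + 1))" for s
  define \<phi>'' where "\<phi>'' s = (\<Sum>e\<in>I. - ((b e)\<^sup>2 / (y e + s * b e)) + (- b e)\<^sup>2 / ((1 - y e) + s * (- b e)))
      - 2 * ((- B)\<^sup>2 / ((1 - Y) + s * (- B)))" for s
  have yle: "y e \<le> 1" if "e \<in> I" for e
    using member_le_sum[of e I y] that y0 fin sy by auto
  have c1: "0 \<le> y e" "0 \<le> y e + b e" if "e \<in> I" for e using that x0 y0 by (auto simp: b_def)
  have c2: "0 \<le> 1 - y e" "0 \<le> (1 - y e) + - b e" if "e \<in> I" for e
    using that yle x0 y0 member_le_sum[of e I x] fin sx by (auto simp: b_def)
  have c3: "0 \<le> 1 - Y" "0 \<le> (1 - Y) + - B"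
    using sy sx by (auto simp: Y_def B_def b_def sum_subtractf)
  have \<phi>eq: "\<phi> s = Fv I (\<lambda>e. y e + s * b e)" for s
  proof -
    have a1: "1 - (y e + s * b e) = (1 - y e) + s * (- b e)" for e by simp
    have a2: "1 - (\<Sum>e\<in>I. y e + s * b e) = (1 - Y) + s * (- B)"
      by (simp add: Y_def B_def sum.distrib sum_distrib_left)
    show ?thesis unfolding Fv_def \<phi>_def a2 by (simp add: a1)
  qed
  have \<phi>1: "\<phi> 1 = Fv I x" unfolding \<phi>eq by (simp add: b_def)
  have \<phi>0: "\<phi> 0 = Fv I y" unfolding \<phi>eq by simp
  have \<phi>t: "\<phi> t = Fv I (\<lambda>e. t * x e + (1 - t) * y e)"
    unfolding \<phi>eq by (rule arg_cong[where f="Fv I"]) (auto simp: b_def algebra_simps)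
  have conc: "concave_on {0<..<1} \<phi>"
  proof (rule f''_le0_imp_concave[where f'=\<phi>' and f''=\<phi>''])
    show "convex {0<..<1::real}" by simp
  next
    fix s :: real assume s: "s \<in> {0<..<1}"
    then have s': "0 < s" "s < 1" by auto
    have p1: "0 < y e + s * b e \<or> (y e = 0 \<and> b e = 0)" if "e \<in> I" for e
      using aff_pos[OF c1[OF that] s'] .
    have p2: "0 < (1 - y e) + s * (- b e) \<or> (1 - y e = 0 \<and> - b e = 0)" if "e \<in> I" for e
      using aff_pos[OF c2[OF that] s'] .
    have p3: "0 < (1 - Y) + s * (- B) \<or> (1 - Y = 0 \<and> - B = 0)"
      using aff_pos[OF c3 s'] .
    show "(\<phi> has_real_derivative \<phi>' s) (at s)"
      unfolding \<phi>_def[abs_def] \<phi>'_def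
      by (intro DERIV_diff DERIV_sum DERIV_add DERIV_minus DERIV_cmult xlnx_deriv p1 p2 p3)
    show "(\<phi>' has_real_derivative \<phi>'' s) (at s)"
      unfolding \<phi>'_def[abs_def] \<phi>''_def
      by (intro DERIV_diff DERIV_sum DERIV_add DERIV_minus DERIV_cmult ln_deriv p1 p2 p3)
    define u where "u e = y e + s * b e" for e
    have u0: "0 \<le> u e" if "e \<in> I" for e using p1[OF that] by (auto simp: u_def)
    have su: "1 - sum u I = (1 - Y) + s * (- B)"
      by (simp add: u_def Y_def B_def sum.distrib sum_distrib_left)
    have rho: "0 \<le> 1 - sum u I" using p3 su by auto
    have cu: "0 < u e \<and> u e < 1" if "e \<in> I" "b e \<noteq> 0" for e
      using p1[OF that(1)] p2[OF that(1)] that(2) by (auto simp: u_def algebra_simps)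
    have cr: "0 < 1 - sum u I" if "sum b I \<noteq> 0" using p3 su that by (auto simp: B_def)
    have K: "(\<Sum>e\<in>I. (b e)\<^sup>2 / (1 - u e)) \<le> (\<Sum>e\<in>I. (b e)\<^sup>2 / u e) + 2 * (sum b I)\<^sup>2 / (1 - sum u I)"
      by (rule key_ineq[OF fin u0 rho cu cr])
    have "\<phi>'' s = (\<Sum>e\<in>I. (b e)\<^sup>2 / (1 - u e)) - (\<Sum>e\<in>I. (b e)\<^sup>2 / u e) - 2 * (sum b I)\<^sup>2 / (1 - sum u I)"
    proof -
      have a1: "(1 - y e) + s * (- b e) = 1 - u e" for e by (simp add: u_def)
      show ?thesis unfolding \<phi>''_def a1 su[symmetric]
        by (simp add: u_def[symmetric] sum.distrib sum_negf B_def sum_subtractf)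
    qed
    then show "\<phi>'' s \<le> 0" using K by linarith
  qed
  have cont: "continuous_on {0..1} \<phi>"
  proof -
    have cx: "continuous_on {0..1} (\<lambda>s. xlnx (a + s * c))" if "0 \<le> a" "0 \<le> a + c" for a c :: real
      by (rule continuous_on_compose2[OF xlnx_cont]) (auto intro!: continuous_intros aff_nonneg that)
    show ?thesis unfolding \<phi>_def
      by (intro continuous_on_diff continuous_on_sum continuous_on_add continuous_on_minus
          continuous_on_mult_left cx c1 c2 c3)
  qed
  show ?thesis using concave_closure01[OF conc cont t] \<phi>0 \<phi>1 \<phi>t by simp
qed



lemma Fv_unit:
  fixes I :: "'b set" and x :: "'b \<Rightarrow> real"
  assumes fin: "finite I" and k: "k \<in> I" and x0: "\<And>e. e \<in> I \<Longrightarrow> 0 \<le> x e"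
    and sx: "sum x I \<le> 1" and xk: "x k = 1"
  shows "Fv I x = 0"
proof -
  have sI: "sum f I = f k + sum f (I - {k})" for f :: "'b \<Rightarrow> real"
    using fin k by (simp add: sum.remove)
  have r0: "0 \<le> sum x (I - {k})" using x0 by (intro sum_nonneg) auto
  with sI[of x] sx xk have "sum x (I - {k}) = 0" by simp
  then have z: "x e = 0" if "e \<in> I - {k}" for e
    using sum_nonneg_eq_0_iff[of "I - {k}" x] fin x0 that by auto
  have s1: "sum x I = 1" using sI[of x] \<open>sum x (I - {k}) = 0\<close> xk by simp
  have "(\<Sum>e\<in>I - {k}. - xlnx (x e) + xlnx (1 - x e)) = 0"
    by (rule sum.neutral) (auto simp: z xlnx_def)
  then show ?thesis unfolding Fv_def using sI[of "\<lambda>e. - xlnx (x e) + xlnx (1 - x e)"] s1 xk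
    by (simp add: xlnx_def)
qed

lemma Fv_nonneg:
  fixes I :: "'b set"
  assumes fin: "finite I"
  shows "\<And>x. (\<And>e. e \<in> I \<Longrightarrow> 0 \<le> x e) \<Longrightarrow> sum x I \<le> 1 \<Longrightarrow> card {e\<in>I. x e \<noteq> 0} = n \<Longrightarrow> 0 \<le> Fv I x"
proof (induction n rule: less_induct)
  case (less n x)
  show ?case
  proof (cases "\<exists>k\<in>I. x k \<noteq> 0")
    case False
    then have z: "x e = 0" if "e \<in> I" for e using that by auto
    have "(\<Sum>e\<in>I. - xlnx (x e) + xlnx (1 - x e)) = 0"
      by (rule sum.neutral) (auto simp: z xlnx_def)
    moreover have "sum x I = 0" by (rule sum.neutral) (auto simp: z)
    ultimately show ?thesis by (simp add: Fv_def xlnx_def)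
  next
    case True
    then obtain k where k: "k \<in> I" "x k \<noteq> 0" by blast
    have sI: "sum f I = f k + sum f (I - {k})" for f :: "'b \<Rightarrow> real"
      using fin k by (simp add: sum.remove)
    have r0: "0 \<le> sum x (I - {k})" using less.prems(1) by (intro sum_nonneg) auto
    have xk0: "0 < x k" using less.prems(1)[OF k(1)] k(2) by simp
    have xk1: "x k \<le> 1" using sI[of x] r0 less.prems(2) by simp
    show ?thesis
    proof (cases "x k = 1")
      case True
      then show ?thesis using Fv_unit[OF fin k(1) less.prems(1) less.prems(2)] by simp
    next
      case False
      with xk1 have xk1': "x k < 1" by simp
      define \<delta> where "\<delta> e = (if e = k then 1 else 0::real)" for e
      define z where "z e = (if e = k then 0 else x e / (1 - x k))" for e
      have xeq: "x = (\<lambda>e. x k * \<delta> e + (1 - x k) * z e)"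
        using xk1' by (auto simp: \<delta>_def z_def fun_eq_iff)
      have d0: "\<And>e. e \<in> I \<Longrightarrow> 0 \<le> \<delta> e" by (simp add: \<delta>_def)
      have sd: "sum \<delta> I = 1" using sI[of \<delta>] by (simp add: \<delta>_def)
      have z0: "\<And>e. e \<in> I \<Longrightarrow> 0 \<le> z e" using less.prems(1) xk1' by (simp add: z_def)
      have "sum z I = sum z (I - {k})" using sI[of z] by (simp add: z_def)
      also have "\<dots> = (\<Sum>e\<in>I - {k}. x e / (1 - x k))" by (rule sum.cong) (auto simp: z_def)
      also have "\<dots> = sum x (I - {k}) / (1 - x k)" by (simp add: sum_divide_distrib)
      also have "\<dots> \<le> 1" using sI[of x] less.prems(2) xk1' by (simp add: divide_simps)
      finally have sz: "sum z I \<le> 1" .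
      have supp: "{e\<in>I. z e \<noteq> 0} = {e\<in>I. x e \<noteq> 0} - {k}"
        using xk1' by (auto simp: z_def)
      have "card {e\<in>I. z e \<noteq> 0} < n"
        unfolding supp less.prems(3)[symmetric] using fin k
        by (intro card_Diff1_less) auto
      then have Fz: "0 \<le> Fv I z" using less.IH z0 sz by blast
      have "x k * Fv I \<delta> + (1 - x k) * Fv I z \<le> Fv I (\<lambda>e. x k * \<delta> e + (1 - x k) * z e)"
        by (rule Fv_concave[OF fin d0 z0]) (use sd sz xk0 xk1 in auto)
      moreover have "Fv I \<delta> = 0" proof (rule Fv_unit[OF fin k(1) d0])
        show "sum \<delta> I \<le> 1" using sd by simp
        show "\<delta> k = 1" by (simp add: \<delta>_def)
      qed
      ultimately show ?thesis using xeq Fz xk1 by (metis mult_nonneg_nonneg diff_ge_0_iff_ge add_0 mult_zero_right order.trans)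
    qed
  qed
qed

theorem proposition4:
  fixes V :: "'a set" and E :: "'a set set"
  assumes "finite_simple_graph V E"
  shows "(\<forall>x\<in>FM V E. SB V E x \<ge> 0) \<and> concave_fun_on (FM V E) (SB V E)"
proof -
  have fV: "finite V" and EV: "\<And>e. e \<in> E \<Longrightarrow> e \<subseteq> V"
    using assms by (auto simp: finite_simple_graph_def)
  have fE: "finite E" using fV EV by (meson finite_Pow_iff finite_subset subsetI PowI)
  have fI: "finite (incident E v)" for v using fE by (simp add: incident_def)
  have SBeq: "SB V E x = 1/2 * (\<Sum>v\<in>V. Fv (incident E v) x)" for x
    by (simp add: SB_def Fv_def)
  have FMx: "(\<forall>e \<in> incident E v. 0 \<le> x e) \<and> sum x (incident E v) \<le> 1"
    if "x \<in> FM V E" "v \<in> V" for x v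
    using that by (auto simp: FM_def incident_def)
  show ?thesis
  proof
    show "\<forall>x\<in>FM V E. SB V E x \<ge> 0"
    proof
      fix x assume x: "x \<in> FM V E"
      have "0 \<le> (\<Sum>v\<in>V. Fv (incident E v) x)"
        using FMx[OF x] Fv_nonneg[OF fI] by (intro sum_nonneg) blast
      then show "SB V E x \<ge> 0" unfolding SBeq by simp
    qed
    show "concave_fun_on (FM V E) (SB V E)"
      unfolding concave_fun_on_def
    proof (intro ballI allI impI)
      fix x y and t :: real assume x: "x \<in> FM V E" and y: "y \<in> FM V E" and t: "0 \<le> t \<and> t \<le> 1"
      have "(\<Sum>v\<in>V. t * Fv (incident E v) x + (1 - t) * Fv (incident E v) y)
          \<le> (\<Sum>v\<in>V. Fv (incident E v) (\<lambda>e. t * x e + (1 - t) * y e))"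
      proof (rule sum_mono)
        fix v assume v: "v \<in> V"
        show "t * Fv (incident E v) x + (1 - t) * Fv (incident E v) y
          \<le> Fv (incident E v) (\<lambda>e. t * x e + (1 - t) * y e)"
          using FMx[OF x v] FMx[OF y v] t by (intro Fv_concave[OF fI]) auto
      qed
      moreover have "t * SB V E x + (1 - t) * SB V E y
          = 1/2 * (\<Sum>v\<in>V. t * Fv (incident E v) x + (1 - t) * Fv (incident E v) y)"
      proof -
        have h: "(\<Sum>v\<in>V. t * Fv (incident E v) x + (1 - t) * Fv (incident E v) y)
          = t * (\<Sum>v\<in>V. Fv (incident E v) x) + (1 - t) * (\<Sum>v\<in>V. Fv (incident E v) y)"
          by (simp add: sum.distrib sum_distrib_left)
        show ?thesis unfolding SBeq h by (simp add: field_simps)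
      qed
      ultimately show "t * SB V E x + (1 - t) * SB V E y \<le> SB V E (\<lambda>e. t * x e + (1 - t) * y e)"
        unfolding SBeq by linarith
    qed
  qed
qed


end
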